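(* Let $\ell_1,\dots,\ell_T$ be labels, $v_1,v_2>0$, and $1\le i\le j\le T$. Suppose the optimal solution of subproblem $(i,j)$ exists and is constant. Then (1) its constant value is $r_{i,j}$; and (2) for every index $k$ with $i\le k\le j$, both $r_{i,k}\ge r_{i,j}$ and $r_{k,j}\le r_{i,j}$.
   Context: A regular binary proper scoring rule (RBPSR) is a function $C_\rho:\{\theta_1,\theta_2\}\times[0,1]\to[0,\infty]$ given by $C_\rho(\theta_1,q)=\int_q^1\frac{\rho(\eta)}{\eta}\,d\eta$ and $C_\rho(\theta_2,q)=\int_0^q\frac{\rho(\eta)}{1-\eta}\,d\eta$, where $\rho$ is a probability distribution on $[0,1]$ (possibly containing Dirac point masses), and these integrals are finite except that $C_\rho(\theta_1,0)$ and $C_\rho(\theta_2,1)$ may equal $\infty$. Given labels $\ell_1,\dots,\ell_T\in\{\theta_1,\theta_2\}$ and weights $v_1,v_2>0$, write $w(\theta_1)=v_1$, $w(\theta_2)=v_2$. For $1\le i\le j\le T$, a solution of subproblem $(i,j)$ is any $p_{i,j}=(p_i,\dots,p_j)\in[0,1]^{j-i+1}$, feasible if $p_i\le\cdots\le p_j$, with objective $J_{i,j}(p_{i,j})=\sum_{t=i}^j w(\ell_t)C_\rho(\ell_t,p_t)$. The optimal solution of subproblem $(i,j)$ is a feasible solution minimizing $J_{i,j}$ among feasible solutions simultaneously for every RBPSR $C_\rho$; it is constant if $p_i=\cdots=p_j$. For $i\le j$, $r_{i,j}=\frac{v_1m_{i,j}}{v_1m_{i,j}+v_2n_{i,j}}$,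 where $m_{i,j},n_{i,j}$ are the numbers of $\theta_1$- and $\theta_2$-labels among $\ell_i,\dots,\ell_j$. *)

theory Defs
  imports "HOL-Probability.Probability"
begin

datatype label = Theta1 | Theta2

definition prob_dist_01 :: "real measure \<Rightarrow> bool" where
  "prob_dist_01 \<rho> \<longleftrightarrow> prob_space \<rho> \<and> sets \<rho> = sets borel \<and> emeasure \<rho> (- {0..1}) = 0"

text \<open>Integrand rho(eta)/eta is read as integration of 1/eta
  against the measure rho; 1/0 is read as infinity.  Convention for atoms at the
  endpoint: theta1 integrates over [q,1], theta2 over [0,q).\<close>
definition C :: "real measure \<Rightarrow> label \<Rightarrow> real \<Rightarrow> ennreal" where
  "C \<rho> l q = (case l of
      Theta1 \<Rightarrow> (\<integral>\<^sup>+ \<eta>. indicator {q..1} \<eta> * (if \<eta> = 0 then \<infinity> else ennreal (1 / \<eta>)) \<partial>\<rho>)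
    | Theta2 \<Rightarrow> (\<integral>\<^sup>+ \<eta>. indicator {0..<q} \<eta> * (if \<eta> = 1 then \<infinity> else ennreal (1 / (1 - \<eta>))) \<partial>\<rho>))"

definition RBPSR :: "real measure \<Rightarrow> bool" where
  "RBPSR \<rho> \<longleftrightarrow> prob_dist_01 \<rho> \<and>
     (\<forall>q\<in>{0..1}. (q \<noteq> 0 \<longrightarrow> C \<rho> Theta1 q < \<infinity>) \<and> (q \<noteq> 1 \<longrightarrow> C \<rho> Theta2 q < \<infinity>))"

definition wt :: "real \<Rightarrow> real \<Rightarrow> label \<Rightarrow> real" where
  "wt v1 v2 l = (case l of Theta1 \<Rightarrow> v1 | Theta2 \<Rightarrow> v2)"

definition J :: "real measure \<Rightarrow> (nat \<Rightarrow> label) \<Rightarrow> real \<Rightarrow> real \<Rightarrow> nat \<Rightarrow> nat \<Rightarrow> (nat \<Rightarrow> real) \<Rightarrow> ennreal" where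
  "J \<rho> lab v1 v2 i j p = (\<Sum>t=i..j. ennreal (wt v1 v2 (lab t)) * C \<rho> (lab t) (p t))"

definition solution :: "nat \<Rightarrow> nat \<Rightarrow> (nat \<Rightarrow> real) \<Rightarrow> bool" where
  "solution i j p \<longleftrightarrow> (\<forall>t\<in>{i..j}. 0 \<le> p t \<and> p t \<le> 1)"

definition feasible :: "nat \<Rightarrow> nat \<Rightarrow> (nat \<Rightarrow> real) \<Rightarrow> bool" where
  "feasible i j p \<longleftrightarrow> solution i j p \<and> (\<forall>s\<in>{i..j}. \<forall>t\<in>{i..j}. s \<le> t \<longrightarrow> p s \<le> p t)"

definition optimal :: "(nat \<Rightarrow> label) \<Rightarrow> real \<Rightarrow> real \<Rightarrow> nat \<Rightarrow> nat \<Rightarrow> (nat \<Rightarrow> real) \<Rightarrow> bool" where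
  "optimal lab v1 v2 i j p \<longleftrightarrow> feasible i j p \<and>
     (\<forall>\<rho>. RBPSR \<rho> \<longrightarrow> (\<forall>p'. feasible i j p' \<longrightarrow> J \<rho> lab v1 v2 i j p \<le> J \<rho> lab v1 v2 i j p'))"

definition constant_sol :: "nat \<Rightarrow> nat \<Rightarrow> (nat \<Rightarrow> real) \<Rightarrow> bool" where
  "constant_sol i j p \<longleftrightarrow> (\<forall>t\<in>{i..j}. p t = p i)"

definition cnt :: "(nat \<Rightarrow> label) \<Rightarrow> label \<Rightarrow> nat \<Rightarrow> nat \<Rightarrow> nat" where
  "cnt lab l i j = card {t\<in>{i..j}. lab t = l}"

definition r :: "(nat \<Rightarrow> label) \<Rightarrow> real \<Rightarrow> real \<Rightarrow> nat \<Rightarrow> nat \<Rightarrow> real" where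
  "r lab v1 v2 i j = v1 * real (cnt lab Theta1 i j) /
      (v1 * real (cnt lab Theta1 i j) + v2 * real (cnt lab Theta2 i j))"

end

theory Submission
  imports Defs
begin

definition g :: "real \<Rightarrow> real \<Rightarrow> real \<Rightarrow> label \<Rightarrow> real \<Rightarrow> real" where
  "g v1 v2 a l q = (case l of Theta1 \<Rightarrow> if q \<le> a then v1/a else 0
                     | Theta2 \<Rightarrow> if a < q then v2/(1-a) else 0)"

lemma dirac_C1:
  assumes "0 < a" "a < 1"
  shows "C (return borel a) Theta1 q = ennreal (if q \<le> a then 1/a else 0)"
proof -
  have m: "(\<lambda>\<eta>. indicator {q..1} \<eta> * (if \<eta> = 0 then \<infinity> else ennreal (1 / \<eta>))) \<in> borel_measurable borel"
    by measurable
  have "C (return borel a) Theta1 q = indicator {q..1} a * (if a = 0 then \<infinity> else ennreal (1 / a))"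
    unfolding C_def label.case by (rule nn_integral_return[OF _ m]) simp
  then show ?thesis using assms by (auto simp: indicator_def)
qed

lemma dirac_C2:
  assumes "0 < a" "a < 1"
  shows "C (return borel a) Theta2 q = ennreal (if a < q then 1/(1-a) else 0)"
proof -
  have m: "(\<lambda>\<eta>. indicator {0..<q} \<eta> * (if \<eta> = 1 then \<infinity> else ennreal (1 / (1-\<eta>)))) \<in> borel_measurable borel"
    by measurable
  have "C (return borel a) Theta2 q = indicator {0..<q} a * (if a = 1 then \<infinity> else ennreal (1 / (1-a)))"
    unfolding C_def label.case by (rule nn_integral_return[OF _ m]) simp
  then show ?thesis using assms by (auto simp: indicator_def)
qed

lemma dirac_RBPSR:
  assumes "0 < a" "a < 1"
  shows "RBPSR (return borel a)"
  unfolding RBPSR_def prob_dist_01_def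
  using assms by (auto simp: dirac_C1 dirac_C2 prob_space_return emeasure_return)

lemma dirac_J:
  assumes "0 < a" "a < 1" "v1 > 0" "v2 > 0"
  shows "J (return borel a) lab v1 v2 i j p = ennreal (\<Sum>t=i..j. g v1 v2 a (lab t) (p t))"
proof -
  have "\<And>t. ennreal (wt v1 v2 (lab t)) * C (return borel a) (lab t) (p t) = ennreal (g v1 v2 a (lab t) (p t))"
    subgoal for t using assms
      by (cases "lab t") (auto simp: dirac_C1 dirac_C2 wt_def g_def ennreal_mult'[symmetric])
    done
  moreover have "\<And>t. g v1 v2 a (lab t) (p t) \<ge> 0" using assms
    by (auto simp: g_def split: label.splits)
  ultimately show ?thesis unfolding J_def
    by (simp add: sum_ennreal)
qed

lemma block_sum:
  assumes "finite A"
  shows "(\<Sum>t\<in>A. g v1 v2 a (lab t) q) = (if q \<le> a then v1 * card {t\<in>A. lab t = Theta1} / a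
            else v2 * card {t\<in>A. lab t = Theta2} / (1-a))"
proof (cases "q \<le> a")
  case True
  have "(\<Sum>t\<in>A. g v1 v2 a (lab t) q) = (\<Sum>t\<in>A. if lab t = Theta1 then v1/a else 0)"
    using True by (intro sum.cong) (auto simp: g_def split: label.splits)
  also have "\<dots> = (\<Sum>t\<in>{t\<in>A. lab t = Theta1}. v1/a)"
    using assms by (subst sum.inter_filter[symmetric]) auto
  finally show ?thesis using True by simp
next
  case False
  have "(\<Sum>t\<in>A. g v1 v2 a (lab t) q) = (\<Sum>t\<in>A. if lab t = Theta2 then v2/(1-a) else 0)"
    using False by (intro sum.cong) (auto simp: g_def split: label.splits)
  also have "\<dots> = (\<Sum>t\<in>{t\<in>A. lab t = Theta2}. v2/(1-a))"
    using assms by (subst sum.inter_filter[symmetric]) auto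
  finally show ?thesis using False by simp
qed

lemma card_split:
  assumes "finite A"
  shows "card {t\<in>A. lab t = Theta1} + card {t\<in>A. lab t = Theta2} = card A"
proof -
  have "A = {t\<in>A. lab t = Theta1} \<union> {t\<in>A. lab t = Theta2}"
    by (auto intro: label.exhaust)
  then have "card A = card ({t\<in>A. lab t = Theta1} \<union> {t\<in>A. lab t = Theta2})" by simp
  also have "\<dots> = card {t\<in>A. lab t = Theta1} + card {t\<in>A. lab t = Theta2}"
    using assms by (intro card_Un_disjoint) auto
  finally show ?thesis by simp
qed

lemma ineq1:
  fixes m n v1 v2 a :: real
  assumes "m \<ge> 0" "n \<ge> 0" "m + n > 0" "v1 > 0" "v2 > 0" "0 < a" "a < 1"
    "a < v1 * m / (v1 * m + v2 * n)"
  shows "v2 * n / (1-a) < v1 * m / a"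
proof -
  have d: "v1 * m + v2 * n > 0" using assms
    by (smt (verit) mult_nonneg_nonneg mult_pos_pos)
  then have "a * (v1 * m + v2 * n) < v1 * m" using assms(8) by (simp add: field_simps)
  then have "v2 * n * a < v1 * m * (1 - a)" by (simp add: algebra_simps)
  then show ?thesis using assms by (simp add: field_simps)
qed

lemma ineq2:
  fixes m n v1 v2 a :: real
  assumes "m \<ge> 0" "n \<ge> 0" "m + n > 0" "v1 > 0" "v2 > 0" "0 < a" "a < 1"
    "a > v1 * m / (v1 * m + v2 * n)"
  shows "v1 * m / a < v2 * n / (1-a)"
proof -
  have d: "v1 * m + v2 * n > 0" using assms
    by (smt (verit) mult_nonneg_nonneg mult_pos_pos)
  then have "a * (v1 * m + v2 * n) > v1 * m" using assms(8) by (simp add: field_simps)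
  then have "v2 * n * a > v1 * m * (1 - a)" by (simp add: algebra_simps)
  then show ?thesis using assms by (simp add: field_simps)
qed

lemma contra:
  assumes "optimal lab v1 v2 i j p" "feasible i j p'" "0 < a" "a < 1" "v1 > 0" "v2 > 0"
    and "(\<Sum>t=i..j. g v1 v2 a (lab t) (p' t)) < (\<Sum>t=i..j. g v1 v2 a (lab t) (p t))"
  shows False
proof -
  have "J (return borel a) lab v1 v2 i j p \<le> J (return borel a) lab v1 v2 i j p'"
    using assms(1,2) dirac_RBPSR[OF assms(3,4)] unfolding optimal_def by blast
  then have "ennreal (\<Sum>t=i..j. g v1 v2 a (lab t) (p t)) \<le> ennreal (\<Sum>t=i..j. g v1 v2 a (lab t) (p' t))"
    using assms by (simp add: dirac_J)
  moreover have "(\<Sum>t=i..j. g v1 v2 a (lab t) (p' t)) \<ge> 0" using assms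
    by (intro sum_nonneg) (auto simp: g_def split: label.splits)
  ultimately show False using assms(7) by (simp add: ennreal_le_iff2)
qed

lemma r_props:
  assumes "v1 > 0" "v2 > 0" "i \<le> k"
  shows "0 \<le> r lab v1 v2 i k" "r lab v1 v2 i k \<le> 1"
    "real (cnt lab Theta1 i k) + real (cnt lab Theta2 i k) > 0"
proof -
  have "cnt lab Theta1 i k + cnt lab Theta2 i k = card {i..k}"
    unfolding cnt_def by (rule card_split) simp
  then have c: "real (cnt lab Theta1 i k) + real (cnt lab Theta2 i k) > 0" using assms(3)
    by (metis of_nat_add of_nat_0_less_iff card_atLeastAtMost zero_less_Suc Suc_diff_le)
  then show "real (cnt lab Theta1 i k) + real (cnt lab Theta2 i k) > 0" .
  show "0 \<le> r lab v1 v2 i k" unfolding r_def using assms by simp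
  have "v1 * real (cnt lab Theta1 i k) \<le> v1 * real (cnt lab Theta1 i k) + v2 * real (cnt lab Theta2 i k)"
    using assms by simp
  moreover have "v1 * real (cnt lab Theta1 i k) + v2 * real (cnt lab Theta2 i k) > 0"
    using c assms by (smt (verit) mult_nonneg_nonneg mult_pos_pos of_nat_0_le_iff)
  ultimately show "r lab v1 v2 i k \<le> 1" unfolding r_def
    by (simp add: divide_le_eq_1)
qed

theorem theorem4p7:
  fixes lab :: "nat \<Rightarrow> label" and v1 v2 :: real and T i j :: nat and p :: "nat \<Rightarrow> real"
  assumes "v1 > 0" and "v2 > 0"
    and "1 \<le> i" and "i \<le> j" and "j \<le> T"
    and "optimal lab v1 v2 i j p"
    and "constant_sol i j p"
  shows "(\<forall>t\<in>{i..j}. p t = r lab v1 v2 i j) \<and>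
         (\<forall>k\<in>{i..j}. r lab v1 v2 i k \<ge> r lab v1 v2 i j \<and> r lab v1 v2 k j \<le> r lab v1 v2 i j)"
proof -
  let ?g = "g v1 v2"
  let ?M = "\<lambda>x y. real (cnt lab Theta1 x y)"
  let ?N = "\<lambda>x y. real (cnt lab Theta2 x y)"
  let ?R = "r lab v1 v2"
  have blk: "(\<Sum>t=x..y. ?g a (lab t) q) = (if q \<le> a then v1 * ?M x y / a else v2 * ?N x y / (1-a))"
    for x y a q using block_sum[of "{x..y}" v1 v2 a lab q] by (simp add: cnt_def)
  have R: "?R x y = v1 * ?M x y / (v1 * ?M x y + v2 * ?N x y)" for x y by (simp add: r_def)
  have opt: "optimal lab v1 v2 i j p" by fact
  then have feas: "feasible i j p" unfolding optimal_def by (rule conjunct1)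
  define c where "c = p i"
  have c01: "0 \<le> c" "c \<le> 1" using feas assms(4) unfolding feasible_def solution_def c_def by auto
  have pc: "\<And>t. t \<in> {i..j} \<Longrightarrow> p t = c" using assms(7) unfolding constant_sol_def c_def by blast
  have sump: "(\<Sum>t=i..j. ?g a (lab t) (p t)) = (\<Sum>t=i..j. ?g a (lab t) c)" for a
    using pc by (intro sum.cong) auto
  have feas_const: "feasible i j (\<lambda>_. q)" if "0 \<le> q" "q \<le> 1" for q
    using that by (simp add: feasible_def solution_def)
  note rp = r_props[OF assms(1,2)]
  have Mpos: "?M x y \<ge> 0" "?N x y \<ge> 0" for x y by auto
  have part1: "c = ?R i j"
  proof (rule ccontr)
    assume ne: "c \<noteq> ?R i j"
    show False
    proof (cases "c < ?R i j")
      case True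
      define a where "a = (c + ?R i j)/2"
      have a: "0 < a" "a < 1" "c \<le> a" "a < ?R i j" using True c01 rp(2)[OF assms(4), of lab] unfolding a_def by auto
      have "v2 * ?N i j / (1-a) < v1 * ?M i j / a"
        using ineq1[OF Mpos rp(3)[OF assms(4), of lab] assms(1,2) a(1,2)] a(4) R by simp
      then have "(\<Sum>t=i..j. ?g a (lab t) 1) < (\<Sum>t=i..j. ?g a (lab t) (p t))"
        unfolding sump blk using a by simp
      then show False using contra[OF opt feas_const[of 1] a(1,2) assms(1,2)] by simp
    next
      case False
      with ne have lt: "?R i j < c" by simp
      define a where "a = (c + ?R i j)/2"
      have a: "0 < a" "a < 1" "\<not> c \<le> a" "a > ?R i j" using lt c01 rp(1)[OF assms(4), of lab] unfolding a_def by auto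
      have "v1 * ?M i j / a < v2 * ?N i j / (1-a)"
        using ineq2[OF Mpos rp(3)[OF assms(4), of lab] assms(1,2) a(1,2)] a(4) R by simp
      then have "(\<Sum>t=i..j. ?g a (lab t) 0) < (\<Sum>t=i..j. ?g a (lab t) (p t))"
        unfolding sump blk using a by simp
      then show False using contra[OF opt feas_const[of 0] a(1,2) assms(1,2)] by simp
    qed
  qed
  have part2: "?R i k \<ge> ?R i j \<and> ?R k j \<le> ?R i j" if k: "k \<in> {i..j}" for k
  proof
    show "?R i k \<ge> ?R i j"
    proof (rule ccontr)
      assume "\<not> ?R i k \<ge> ?R i j"
      then have lt: "?R i k < c" using part1 by simp
      define a where "a = (c + ?R i k)/2"
      have ik: "i \<le> k" using k by simp
      have a: "0 < a" "a < 1" "\<not> c \<le> a" "a > ?R i k" using lt c01 rp(1)[OF ik, of lab] unfolding a_def by auto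
      define p' where "p' = (\<lambda>t. if t \<le> k then 0 else c)"
      have fp': "feasible i j p'" using c01 unfolding feasible_def solution_def p'_def by auto
      have split: "{i..j} = {i..k} \<union> {k<..j}" using k by auto
      have S: "(\<Sum>t=i..j. f t) = (\<Sum>t=i..k. f t) + (\<Sum>t\<in>{k<..j}. f t)" for f :: "nat \<Rightarrow> real"
        unfolding split by (rule sum.union_disjoint) auto
      have eq2: "(\<Sum>t\<in>{k<..j}. ?g a (lab t) (p' t)) = (\<Sum>t\<in>{k<..j}. ?g a (lab t) (p t))"
        using pc k by (intro sum.cong) (auto simp: p'_def)
      have eq1a: "(\<Sum>t=i..k. ?g a (lab t) (p' t)) = (\<Sum>t=i..k. ?g a (lab t) 0)"
        by (intro sum.cong) (auto simp: p'_def)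
      have eq1b: "(\<Sum>t=i..k. ?g a (lab t) (p t)) = (\<Sum>t=i..k. ?g a (lab t) c)"
        using pc k by (intro sum.cong) auto
      have "v1 * ?M i k / a < v2 * ?N i k / (1-a)"
        using ineq2[OF Mpos rp(3)[OF ik, of lab] assms(1,2) a(1,2)] a(4) R by simp
      then have "(\<Sum>t=i..k. ?g a (lab t) (p' t)) < (\<Sum>t=i..k. ?g a (lab t) (p t))"
        unfolding eq1a eq1b blk using a by simp
      then have "(\<Sum>t=i..j. ?g a (lab t) (p' t)) < (\<Sum>t=i..j. ?g a (lab t) (p t))"
        unfolding S eq2 by simp
      then show False using contra[OF opt fp' a(1,2) assms(1,2)] by simp
    qed
    show "?R k j \<le> ?R i j"
    proof (rule ccontr)
      assume "\<not> ?R k j \<le> ?R i j"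
      then have lt: "c < ?R k j" using part1 by simp
      define a where "a = (c + ?R k j)/2"
      have kj: "k \<le> j" using k by simp
      have a: "0 < a" "a < 1" "c \<le> a" "a < ?R k j" using lt c01 rp(2)[OF kj, of lab] unfolding a_def by auto
      define p' where "p' = (\<lambda>t. if t < k then c else 1)"
      have fp': "feasible i j p'" using c01 unfolding feasible_def solution_def p'_def by auto
      have split: "{i..j} = {i..<k} \<union> {k..j}" using k by auto
      have S: "(\<Sum>t=i..j. f t) = (\<Sum>t\<in>{i..<k}. f t) + (\<Sum>t=k..j. f t)" for f :: "nat \<Rightarrow> real"
        unfolding split by (rule sum.union_disjoint) auto
      have eq2: "(\<Sum>t\<in>{i..<k}. ?g a (lab t) (p' t)) = (\<Sum>t\<in>{i..<k}. ?g a (lab t) (p t))"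
        using pc k by (intro sum.cong) (auto simp: p'_def)
      have eq1a: "(\<Sum>t=k..j. ?g a (lab t) (p' t)) = (\<Sum>t=k..j. ?g a (lab t) 1)"
        by (intro sum.cong) (auto simp: p'_def)
      have eq1b: "(\<Sum>t=k..j. ?g a (lab t) (p t)) = (\<Sum>t=k..j. ?g a (lab t) c)"
        using pc k by (intro sum.cong) auto
      have "v2 * ?N k j / (1-a) < v1 * ?M k j / a"
        using ineq1[OF Mpos rp(3)[OF kj, of lab] assms(1,2) a(1,2)] a(4) R by simp
      then have "(\<Sum>t=k..j. ?g a (lab t) (p' t)) < (\<Sum>t=k..j. ?g a (lab t) (p t))"
        unfolding eq1a eq1b blk using a by simp
      then have "(\<Sum>t=i..j. ?g a (lab t) (p' t)) < (\<Sum>t=i..j. ?g a (lab t) (p t))"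
        unfolding S eq2 by simp
      then show False using contra[OF opt fp' a(1,2) assms(1,2)] by simp
    qed
  qed
  show ?thesis using part1 part2 pc by auto
qed

end
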